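(* Let $G \ge 2$ and $p_t \in (0,1)$. Let $r_{t,1},\dots,r_{t,G}$ be i.i.d. $\mathrm{Bernoulli}(p_t)$, $R=\sum_{j} r_{t,j}$, $\hat p_t=R/G$, $\hat A_{t,i}=r_{t,i}-\hat p_t$, $A_{t,i}=r_{t,i}-p_t$, and $\mathcal S=\{1\le R\le G-1\}$. Then for every $i\in[G]$, \[ \mathbb E\!\left[A_{t,i}-\hat A_{t,i}\mid \mathcal S\right]=\frac{p_t(1-p_t)^G+p_t^{G+1}-p_t^G}{1-(1-p_t)^G-p_t^G}. \]
   Context: $\hat A_{t,i}$ is the group-relative advantage with group baseline $\hat p_t$; $A_{t,i}$ is the expected advantage; $\mathcal S$ is the event that not all rewards in the group are equal. *)

theory Defs
  imports "HOL-Probability.Probability"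
begin

definition num_succ :: "nat \<Rightarrow> (nat \<Rightarrow> bool) \<Rightarrow> real" where
  "num_succ G \<omega> = (\<Sum>j<G. of_bool (\<omega> j))"

end

theory Submission
  imports Defs
begin

lemma num_succ_card: "num_succ G \<omega> = real (card {j\<in>{..<G}. \<omega> j})"
  unfolding num_succ_def of_bool_def
  by (simp add: sum.If_cases Int_def)

lemma card_allF: fixes G :: nat shows "card {j\<in>{..<G}. \<omega> j} = 0 \<longleftrightarrow> (\<forall>j<G. \<not> \<omega> j)"
proof -
  have "finite {j\<in>{..<G}. \<omega> j}" by (rule finite_subset[of _ "{..<G}"]) auto
  then show ?thesis by (subst card_eq_0_iff) auto
qed

lemma card_allT: fixes G :: nat shows "card {j\<in>{..<G}. \<omega> j} = G \<longleftrightarrow> (\<forall>j<G. \<omega> j)"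
proof
  assume h: "card {j\<in>{..<G}. \<omega> j} = G"
  have "{j\<in>{..<G}. \<omega> j} = {..<G}"
    by (rule card_subset_eq) (use h in auto)
  then show "\<forall>j<G. \<omega> j" by auto
next
  assume "\<forall>j<G. \<omega> j"
  then have "{j\<in>{..<G}. \<omega> j} = {..<G}" by auto
  then show "card {j\<in>{..<G}. \<omega> j} = G" by simp
qed

lemma card_le: fixes G :: nat shows "card {j\<in>{..<G}. \<omega> j} \<le> G"
  by (metis (no_types, lifting) card_lessThan card_mono finite_lessThan mem_Collect_eq subsetI)

theorem lemma2:
  fixes G :: nat and p :: real and i :: nat
  assumes "G \<ge> 2" and "0 < p" and "p < 1" and "i < G"
  defines "M \<equiv> Pi_pmf {..<G} False (\<lambda>_. bernoulli_pmf p)"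
      and "S \<equiv> {\<omega>. 1 \<le> num_succ G \<omega> \<and> num_succ G \<omega> \<le> real G - 1}"
  shows "measure_pmf.expectation (cond_pmf M S)
           (\<lambda>\<omega>. (of_bool (\<omega> i) - p) - (of_bool (\<omega> i) - num_succ G \<omega> / real G))
         = (p * (1 - p) ^ G + p ^ (G + 1) - p ^ G) / (1 - (1 - p) ^ G - p ^ G)"
proof -
  define AF where "AF = {\<omega>::nat\<Rightarrow>bool. \<forall>j<G. \<not> \<omega> j}"
  define AT where "AT = {\<omega>::nat\<Rightarrow>bool. \<forall>j<G. \<omega> j}"
  define f where "f = (\<lambda>\<omega>. num_succ G \<omega> / real G - p)"
  have G0: "real G > 0" using assms(1) by simp
  have fin: "finite (set_pmf M)"
  proof (rule finite_subset)
    show "set_pmf M \<subseteq> PiE_dflt {..<G} False (\<lambda>_. UNIV)"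
      using set_Pi_pmf_subset[of "{..<G}" False "\<lambda>_. bernoulli_pmf p"]
      unfolding M_def PiE_dflt_def by auto
  qed (auto)
  have int: "integrable (measure_pmf M) g" for g :: "_ \<Rightarrow> real"
    by (rule integrable_measure_pmf_finite[OF fin])
  have indS: "indicator S \<omega> = 1 - indicator AF \<omega> - (indicator AT \<omega> :: real)" for \<omega>
  proof -
    define k where "k = card {j\<in>{..<G}. \<omega> j}"
    have kle: "k \<le> G" unfolding k_def by (rule card_le)
    have "\<omega> \<in> S \<longleftrightarrow> 1 \<le> real k \<and> real k \<le> real G - 1"
      unfolding S_def num_succ_card k_def by simp
    also have "\<dots> \<longleftrightarrow> k \<noteq> 0 \<and> k \<noteq> G" using kle by linarith
    finally have "\<omega> \<in> S \<longleftrightarrow> k \<noteq> 0 \<and> k \<noteq> G" .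
    moreover have "\<omega> \<in> AF \<longleftrightarrow> k = 0" unfolding AF_def k_def using card_allF by blast
    moreover have "\<omega> \<in> AT \<longleftrightarrow> k = G" unfolding AT_def k_def using card_allT by blast
    ultimately show ?thesis using assms(1) by (auto simp: indicator_def)
  qed
  have indS_fun: "(indicator S :: _ \<Rightarrow> real) = (\<lambda>\<omega>. 1 - indicator AF \<omega> - indicator AT \<omega>)"
    by (rule ext) (rule indS)
  have fS: "f \<omega> * indicator S \<omega> = f \<omega> + p * indicator AF \<omega> - (1 - p) * indicator AT \<omega>" for \<omega>
  proof -
    have "\<omega> \<in> AF \<Longrightarrow> num_succ G \<omega> = 0" unfolding AF_def num_succ_def by simp
    moreover have "\<omega> \<in> AT \<Longrightarrow> num_succ G \<omega> = G" unfolding AT_def num_succ_def by simp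
    moreover have "\<omega> \<in> AF \<Longrightarrow> \<omega> \<notin> AT" using assms(1) unfolding AF_def AT_def
      by (metis One_nat_def less_2_cases_iff less_le_trans mem_Collect_eq)
    ultimately show ?thesis unfolding indS f_def using G0
      by (auto simp: indicator_def field_simps)
  qed
  have compo: "measure_pmf.expectation M (\<lambda>\<omega>. of_bool (\<omega> j)) = p" if "j < G" for j
  proof -
    have "measure_pmf.expectation M (\<lambda>\<omega>. of_bool (\<omega> j) :: real) =
          measure_pmf.expectation (map_pmf (\<lambda>\<omega>. \<omega> j) M) (\<lambda>b. of_bool b :: real)" by (rule integral_map_pmf[symmetric])
    also have "map_pmf (\<lambda>\<omega>. \<omega> j) M = bernoulli_pmf p"
      unfolding M_def using that by (subst Pi_pmf_component) auto
    finally show ?thesis using assms by simp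
  qed
  have ER: "measure_pmf.expectation M (num_succ G) = real G * p"
    unfolding num_succ_def
    by (subst Bochner_Integration.integral_sum) (auto intro: int simp: compo)
  have EAF: "measure_pmf.prob M AF = (1 - p) ^ G"
  proof -
    have "AF = Pi {..<G} (\<lambda>_. {False})" unfolding AF_def Pi_def by auto
    then show ?thesis unfolding M_def using assms
      by (simp add: measure_Pi_pmf_Pi measure_pmf_single)
  qed
  have EAT: "measure_pmf.prob M AT = p ^ G"
  proof -
    have "AT = Pi {..<G} (\<lambda>_. {True})" unfolding AT_def Pi_def by auto
    then show ?thesis unfolding M_def using assms
      by (simp add: measure_Pi_pmf_Pi measure_pmf_single)
  qed
  have PS: "measure_pmf.prob M S = 1 - (1 - p) ^ G - p ^ G"
  proof -
    have "measure_pmf.prob M S = measure_pmf.expectation M (indicator S)" by simp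
    also have "\<dots> = measure_pmf.expectation M (\<lambda>\<omega>. 1 - indicator AF \<omega> - indicator AT \<omega>)"
      by (subst indS_fun) (rule refl)
    also have "\<dots> = 1 - measure_pmf.prob M AF - measure_pmf.prob M AT"
      by (simp add: int)
    finally show ?thesis using EAF EAT by simp
  qed
  have pos: "1 - (1 - p) ^ G - p ^ G > 0"
  proof -
    have "(1 - p) ^ G < (1 - p) ^ 1"
      by (rule power_strict_decreasing) (use assms in auto)
    moreover have "p ^ G < p ^ 1"
      by (rule power_strict_decreasing) (use assms in auto)
    ultimately show ?thesis by simp
  qed
  have ne: "set_pmf M \<inter> S \<noteq> {}"
    using PS pos measure_pmf_zero_iff[of M S] by auto
  have EfS: "measure_pmf.expectation M (\<lambda>\<omega>. f \<omega> * indicator S \<omega>)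
      = p * (1 - p) ^ G - (1 - p) * p ^ G"
  proof -
    have "measure_pmf.expectation M (\<lambda>\<omega>. f \<omega> * indicator S \<omega>)
        = measure_pmf.expectation M (\<lambda>\<omega>. num_succ G \<omega> / real G - p + p * indicator AF \<omega> - (1 - p) * indicator AT \<omega>)"
      by (simp only: fS) (simp add: f_def)
    also have "\<dots> = measure_pmf.expectation M (num_succ G) / real G - p + p * measure_pmf.prob M AF - (1 - p) * measure_pmf.prob M AT"
      by (simp add: int)
    finally show ?thesis using ER EAF EAT G0 by simp
  qed
  have "measure_pmf.expectation (cond_pmf M S)
           (\<lambda>\<omega>. (of_bool (\<omega> i) - p) - (of_bool (\<omega> i) - num_succ G \<omega> / real G))
      = measure_pmf.expectation (cond_pmf M S) f" unfolding f_def by simp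
  also have "\<dots> = (\<Sum>a\<in>set_pmf M. f a * pmf (cond_pmf M S) a)"
    by (rule integral_measure_pmf_real) (use fin ne in auto)
  also have "\<dots> = (\<Sum>a\<in>set_pmf M. f a * indicator S a * pmf M a) / measure_pmf.prob M S"
    by (simp add: pmf_cond[OF ne] sum_divide_distrib indicator_def) (rule sum.cong, auto)
  also have "(\<Sum>a\<in>set_pmf M. f a * indicator S a * pmf M a) = measure_pmf.expectation M (\<lambda>\<omega>. f \<omega> * indicator S \<omega>)"
    by (rule integral_measure_pmf_real[symmetric]) (use fin in auto)
  finally show ?thesis using EfS PS by (simp add: algebra_simps)
qed

end
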